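(* For every positive integer $n$, $$\sum_{j=1}^{n}\csc^4\left(\frac{\pi(2j-1)}{4n}\right) = \frac{4n^2(2n^2+1)}{3}.$$ *)

theory Defs
  imports Complex_Main
begin

definition csc :: "real \<Rightarrow> real" where
  "csc x = 1 / sin x"

end

theory Submission imports Defs "HOL-Analysis.Analysis" begin

lemma sin_shift_ne0:
  fixes m k :: nat and y :: real
  assumes "m \<ge> 1" "sin (real m * y) \<noteq> 0"
  shows "sin (y + real k * pi / real m) \<noteq> 0"
proof
  assume "sin (y + real k * pi / real m) = 0"
  then obtain i :: int where i: "y + real k * pi / real m = of_int i * pi"
    by (auto simp: sin_zero_iff_int2)
  have "real m * y = of_int (int m * i - int k) * pi"
    using i assms(1) by (simp add: field_simps)
  then have "sin (real m * y) = 0" unfolding sin_zero_iff_int2 by blast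
  with assms show False by simp
qed

lemma open_S: "open {y::real. sin (real m * y) \<noteq> 0}"
  by (rule open_Collect_neq) (auto intro!: continuous_intros)

lemma diff_step:
  fixes m :: nat and a :: real and f f' :: "real \<Rightarrow> real"
  assumes m: "m \<ge> 1"
    and der: "\<And>y. sin y \<noteq> 0 \<Longrightarrow> (f has_real_derivative f' y) (at y)"
    and eq: "\<And>y. sin (real m * y) \<noteq> 0 \<Longrightarrow>
               (\<Sum>k<m. f (y + real k * pi / real m)) = a * f (real m * y)"
    and y: "sin (real m * y) \<noteq> 0"
  shows "(\<Sum>k<m. f' (y + real k * pi / real m)) = a * real m * f' (real m * y)"
proof -
  let ?S = "{y::real. sin (real m * y) \<noteq> 0}"
  have d1: "((\<lambda>y. \<Sum>k<m. f (y + real k * pi / real m)) has_real_derivative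
             (\<Sum>k<m. f' (y + real k * pi / real m))) (at y)"
  proof (rule DERIV_sum)
    fix k assume "k \<in> {..<m}"
    have s0: "sin (y + real k * pi / real m) \<noteq> 0" using sin_shift_ne0[OF m y] .
    have g: "((\<lambda>x. x + real k * pi / real m) has_real_derivative 1) (at y)"
      by (auto intro!: derivative_eq_intros)
    from DERIV_chain2[OF der[OF s0] g]
    show "((\<lambda>x. f (x + real k * pi / real m)) has_real_derivative f' (y + real k * pi / real m)) (at y)"
      by simp
  qed
  have d2: "((\<lambda>y. a * f (real m * y)) has_real_derivative a * real m * f' (real m * y)) (at y)"
  proof -
    have g: "((\<lambda>x. real m * x) has_real_derivative real m) (at y)"
      by (auto intro!: derivative_eq_intros)
    have "((\<lambda>y. f (real m * y)) has_real_derivative f' (real m * y) * real m) (at y)"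
      using DERIV_chain2[OF der[OF y] g] by simp
    from DERIV_cmult[OF this, of a] show ?thesis by (simp add: mult_ac)
  qed
  have d3: "((\<lambda>y. a * f (real m * y)) has_real_derivative
             (\<Sum>k<m. f' (y + real k * pi / real m))) (at y)"
    by (rule has_field_derivative_transform_within_open[OF d1 open_S, of m]) (use y eq in auto)
  show ?thesis using DERIV_unique[OF d3 d2] .
qed


lemma unity_sum:
  fixes m l :: nat
  assumes m: "m \<ge> 1" and l: "l < m"
  shows "(\<Sum>k<m. exp (2 * pi * \<i> / of_nat m) ^ (k * l)) = (if l = 0 then of_nat m else 0)"
proof (cases "l = 0")
  case True then show ?thesis by simp
next
  case False
  let ?q = "exp (2 * pi * \<i> / of_nat m) ^ l"
  have qm: "?q ^ m = 1"
  proof -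
    have "?q ^ m = exp (2 * pi * \<i> / of_nat m) ^ (m * l)" by (simp add: power_mult[symmetric] mult.commute)
    also have "\<dots> = exp (of_nat (m * l) * (2 * pi * \<i> / of_nat m))" by (rule exp_of_nat_mult[symmetric])
    also have "of_nat (m * l) * (2 * pi * \<i> / of_nat m) = of_nat l * (2 * pi * \<i>)" using m by (simp add: field_simps)
    also have "exp (of_nat l * (2 * pi * \<i>)) = exp (2 * pi * \<i>) ^ l" by (rule exp_of_nat_mult)
    finally show ?thesis by simp
  qed
  have q1: "?q \<noteq> 1"
  proof
    assume "?q = 1"
    then have "exp (of_nat l * (2 * pi * \<i> / of_nat m)) = 1" by (simp only: exp_of_nat_mult)
    then obtain n :: int where n: "Im (of_nat l * (2 * pi * \<i> / of_nat m)) = of_int (2 * n) * pi"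
      by (auto simp: exp_eq_1)
    then have "real l * 2 * pi / real m = of_int (2 * n) * pi" by simp
    then have "real l = of_int n * real m" using m by (simp add: field_simps)
    then have "int l = n * int m" by (metis of_int_eq_iff of_int_mult of_int_of_nat_eq)
    have "n \<ge> 1 \<or> n \<le> 0" by linarith
    then show False
    proof
      assume "n \<ge> 1"
      then have "n * int m \<ge> int m" using m by (simp add: mult_le_cancel_right1)
      then show False using \<open>int l = n * int m\<close> l by linarith
    next
      assume "n \<le> 0"
      then have "n * int m \<le> 0" using m by (simp add: mult_nonpos_nonneg)
      then show False using \<open>int l = n * int m\<close> False by linarith
    qed
  qed
  have "(\<Sum>k<m. exp (2 * pi * \<i> / of_nat m) ^ (k * l)) = (\<Sum>k<m. ?q ^ k)"
    by (rule sum.cong) (simp_all add: power_mult[symmetric] mult.commute)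
  also have "\<dots> = 0" using q1 qm by (simp add: sum_gp_strict)
  finally show ?thesis using False by simp
qed


lemma inv_geo:
  fixes w Z :: complex
  assumes "w ^ m = Z" "w \<noteq> 1" "Z \<noteq> 1"
  shows "1 / (w - 1) = (\<Sum>l<m. w ^ l) / (Z - 1)"
proof -
  have "(\<Sum>l<m. w ^ l) = (1 - Z) / (1 - w)" using assms by (simp add: sum_gp_strict)
  moreover have "1 - w \<noteq> 0" "Z - 1 \<noteq> 0" "w - 1 \<noteq> 0" using assms by auto
  ultimately show ?thesis by (simp add: field_simps)
qed

lemma sum_inv:
  fixes m :: nat and z :: complex
  defines "\<omega> \<equiv> exp (2 * pi * \<i> / of_nat m)"
  assumes m: "m \<ge> 1" and z: "z ^ m \<noteq> 1"
  shows "(\<Sum>k<m. 1 / (z * \<omega> ^ k - 1)) = of_nat m / (z ^ m - 1)"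
proof -
  have om: "\<omega> ^ m = 1"
  proof -
    have "\<omega> ^ m = exp (of_nat m * (2 * pi * \<i> / of_nat m))" unfolding \<omega>_def by (rule exp_of_nat_mult[symmetric])
    also have "of_nat m * (2 * pi * \<i> / of_nat m) = 2 * pi * \<i>" using m by simp
    finally show ?thesis by simp
  qed
  have wm: "(z * \<omega> ^ k) ^ m = z ^ m" for k
    by (simp add: power_mult_distrib power_mult[symmetric] mult.commute[of k m]) (simp add: power_mult om)
  have w1: "z * \<omega> ^ k \<noteq> 1" for k
    using wm[of k] z by auto
  have "(\<Sum>k<m. 1 / (z * \<omega> ^ k - 1)) = (\<Sum>k<m. (\<Sum>l<m. (z * \<omega> ^ k) ^ l) / (z ^ m - 1))"
    by (rule sum.cong[OF refl], rule inv_geo[OF wm w1 z])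
  also have "\<dots> = (\<Sum>k<m. \<Sum>l<m. z ^ l * \<omega> ^ (k * l)) / (z ^ m - 1)"
    by (simp add: sum_divide_distrib power_mult_distrib power_mult)
  also have "(\<Sum>k<m. \<Sum>l<m. z ^ l * \<omega> ^ (k * l)) = (\<Sum>l<m. z ^ l * (\<Sum>k<m. \<omega> ^ (k * l)))"
    by (subst sum.swap) (simp add: sum_distrib_left)
  also have "\<dots> = (\<Sum>l<m. z ^ l * (if l = 0 then of_nat m else 0))"
  proof (rule sum.cong[OF refl])
    fix l assume "l \<in> {..<m}"
    then have "l < m" by simp
    show "z ^ l * (\<Sum>k<m. \<omega> ^ (k * l)) = z ^ l * (if l = 0 then of_nat m else 0)"
      unfolding \<omega>_def unity_sum[OF m \<open>l < m\<close>] ..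
  qed
  also have "\<dots> = of_nat m"
    using m by (simp add: sum.delta' if_distrib cong: if_cong)
  finally show ?thesis .
qed

lemma cot_complex:
  fixes \<theta> :: real
  assumes "sin \<theta> \<noteq> 0"
  shows "complex_of_real (cot \<theta>) = \<i> * (exp (2 * \<i> * of_real \<theta>) + 1) / (exp (2 * \<i> * of_real \<theta>) - 1)"
proof -
  define a where "a = exp (\<i> * of_real \<theta>)"
  have a0: "a \<noteq> 0" by (simp add: a_def)
  have am: "exp (- (\<i> * of_real \<theta>)) = 1 / a" by (simp add: a_def exp_minus field_simps)
  have a2: "exp (2 * \<i> * of_real \<theta>) = a ^ 2"
    unfolding a_def by (simp add: exp_of_nat_mult[symmetric] mult_ac)
  have s: "complex_of_real (sin \<theta>) = (a - 1 / a) / (2 * \<i>)"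
    by (simp add: sin_of_real[symmetric] sin_exp_eq am a_def)
  have c: "complex_of_real (cos \<theta>) = (a + 1 / a) / 2"
    by (simp add: cos_of_real[symmetric] cos_exp_eq am a_def)
  have "a - 1 / a \<noteq> 0" using s assms by auto
  then have "a ^ 2 - 1 \<noteq> 0" using a0 by (simp add: field_simps power2_eq_square)
  have "complex_of_real (cot \<theta>) = complex_of_real (cos \<theta>) / complex_of_real (sin \<theta>)"
    by (simp add: cot_def)
  also have "\<dots> = \<i> * (a ^ 2 + 1) / (a ^ 2 - 1)"
    unfolding s c using a0 \<open>a ^ 2 - 1 \<noteq> 0\<close> \<open>a - 1 / a \<noteq> 0\<close>
    by (simp add: field_simps power2_eq_square)
  finally show ?thesis by (simp add: a2)
qed


lemma exp2_ne1:
  fixes \<theta> :: real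
  assumes "sin \<theta> \<noteq> 0"
  shows "exp (2 * \<i> * of_real \<theta>) \<noteq> 1"
proof
  assume "exp (2 * \<i> * of_real \<theta>) = 1"
  then obtain n :: int where "2 * \<theta> = of_int (2 * n) * pi" by (auto simp: exp_eq_1)
  then have "\<theta> = of_int n * pi" by simp
  then have "sin \<theta> = 0" by (simp add: sin_zero_iff_int2)
  with assms show False by simp
qed

lemma cot_sum:
  fixes m :: nat and y :: real
  assumes m: "m \<ge> 1" and y: "sin (real m * y) \<noteq> 0"
  shows "(\<Sum>k<m. cot (y + real k * pi / real m)) = real m * cot (real m * y)"
proof -
  define \<omega> where "\<omega> = exp (2 * pi * \<i> / of_nat m)"
  define z where "z = exp (2 * \<i> * of_real y)"
  have zm: "z ^ m = exp (2 * \<i> * of_real (real m * y))"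
    unfolding z_def by (simp add: exp_of_nat_mult[symmetric] mult_ac)
  have zm1: "z ^ m \<noteq> 1" unfolding zm by (rule exp2_ne1[OF y])
  have wk: "exp (2 * \<i> * of_real (y + real k * pi / real m)) = z * \<omega> ^ k" for k
  proof -
    have "2 * \<i> * of_real (y + real k * pi / real m) = 2 * \<i> * of_real y + of_nat k * (2 * pi * \<i> / of_nat m)"
      by (simp add: field_simps)
    then show ?thesis unfolding z_def \<omega>_def by (simp only: exp_add exp_of_nat_mult)
  qed
  have "complex_of_real (\<Sum>k<m. cot (y + real k * pi / real m))
      = (\<Sum>k<m. \<i> * (z * \<omega> ^ k + 1) / (z * \<omega> ^ k - 1))"
    unfolding of_real_sum
    by (rule sum.cong[OF refl]) (simp only: cot_complex[OF sin_shift_ne0[OF m y]] wk)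
  also have "\<dots> = (\<Sum>k<m. \<i> + 2 * \<i> * (1 / (z * \<omega> ^ k - 1)))"
  proof (rule sum.cong[OF refl])
    fix k
    have "z * \<omega> ^ k - 1 \<noteq> 0"
      using exp2_ne1[OF sin_shift_ne0[OF m y, of k]] wk[of k] by simp
    then show "\<i> * (z * \<omega> ^ k + 1) / (z * \<omega> ^ k - 1) = \<i> + 2 * \<i> * (1 / (z * \<omega> ^ k - 1))"
      by (simp add: field_simps)
  qed
  also have "\<dots> = of_nat m * \<i> + 2 * \<i> * (of_nat m / (z ^ m - 1))"
    by (simp only: sum.distrib sum_distrib_left[symmetric] sum_inv[OF m zm1, folded \<omega>_def]) simp
  also have "\<dots> = of_nat m * (\<i> * (z ^ m + 1) / (z ^ m - 1))"
    using zm1 by (simp add: field_simps)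
  also have "\<dots> = complex_of_real (real m * cot (real m * y))"
    by (simp add: cot_complex[OF y] zm)
  finally show ?thesis by (simp only: of_real_eq_iff)
qed


lemma d0: "sin y \<noteq> 0 \<Longrightarrow> (cot has_real_derivative (\<lambda>y. - (1 / sin y ^ 2)) y) (at y)"
  using DERIV_cot[of y] by (simp add: field_simps)

lemma d1: "sin y \<noteq> 0 \<Longrightarrow> ((\<lambda>y. 1 / sin y ^ 2) has_real_derivative (\<lambda>y. -2 * (cos y / sin y ^ 3)) y) (at y)"
  by (auto intro!: derivative_eq_intros simp: field_simps power2_eq_square power3_eq_cube)

lemma d2: "sin y \<noteq> 0 \<Longrightarrow> ((\<lambda>y. cos y / sin y ^ 3) has_real_derivative (\<lambda>y. 2 * (1 / sin y ^ 2) - 3 * (1 / sin y ^ 4)) y) (at y)"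
proof -
  assume s: "sin y \<noteq> 0"
  have "((\<lambda>y. cos y / sin y ^ 3) has_real_derivative (- sin y * sin y ^ 3 - cos y * (3 * sin y ^ 2 * cos y)) / (sin y ^ 3 * sin y ^ 3)) (at y)"
    using s by (auto intro!: derivative_eq_intros)
  moreover have "(- sin y * sin y ^ 3 - cos y * (3 * sin y ^ 2 * cos y)) / (sin y ^ 3 * sin y ^ 3) = 2 * (1 / sin y ^ 2) - 3 * (1 / sin y ^ 4)"
  proof -
    have c: "cos y ^ 2 = 1 - sin y ^ 2" by (simp add: cos_squared_eq)
    have "(- sin y * sin y ^ 3 - cos y * (3 * sin y ^ 2 * cos y)) = - (sin y ^ 4) - 3 * sin y ^ 2 * cos y ^ 2"
      by (simp add: power2_eq_square power3_eq_cube power4_eq_xxxx)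
    also have "\<dots> = 2 * sin y ^ 4 - 3 * sin y ^ 2" unfolding c by (simp add: algebra_simps power2_eq_square power4_eq_xxxx)
    finally have e: "(- sin y * sin y ^ 3 - cos y * (3 * sin y ^ 2 * cos y)) = 2 * sin y ^ 4 - 3 * sin y ^ 2" .
    show ?thesis unfolding e using s by (simp add: field_simps power2_eq_square power3_eq_cube power4_eq_xxxx)
  qed
  ultimately show ?thesis by simp
qed

lemma sumB:
  assumes m: "m \<ge> 1" and y: "sin (real m * y) \<noteq> 0"
  shows "(\<Sum>k<m. 1 / sin (y + real k * pi / real m) ^ 2) = real m ^ 2 * (1 / sin (real m * y) ^ 2)"
  using diff_step[OF m d0 cot_sum[OF m] y] by (simp add: sum_negf power2_eq_square)

lemma sumC:
  assumes m: "m \<ge> 1" and y: "sin (real m * y) \<noteq> 0"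
  shows "(\<Sum>k<m. cos (y + real k * pi / real m) / sin (y + real k * pi / real m) ^ 3) = real m ^ 3 * (cos (real m * y) / sin (real m * y) ^ 3)"
proof -
  have "(\<Sum>k<m. -2 * (cos (y + real k * pi / real m) / sin (y + real k * pi / real m) ^ 3)) = real m ^ 2 * real m * (-2 * (cos (real m * y) / sin (real m * y) ^ 3))"
    using diff_step[OF m d1 sumB[OF m] y] .
  then have "-2 * (\<Sum>k<m. cos (y + real k * pi / real m) / sin (y + real k * pi / real m) ^ 3) = -2 * (real m ^ 3 * (cos (real m * y) / sin (real m * y) ^ 3))"
    by (simp only: sum_distrib_left[symmetric]) (simp add: power3_eq_cube power2_eq_square)
  then show ?thesis by simp
qed

lemma sumD:
  assumes m: "m \<ge> 1" and y: "sin (real m * y) \<noteq> 0"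
  shows "(\<Sum>k<m. 2 * (1 / sin (y + real k * pi / real m) ^ 2) - 3 * (1 / sin (y + real k * pi / real m) ^ 4))
     = real m ^ 4 * (2 * (1 / sin (real m * y) ^ 2) - 3 * (1 / sin (real m * y) ^ 4))"
  using diff_step[OF m d2 sumC[OF m] y] by (simp add: power3_eq_cube power4_eq_xxxx)


theorem mainTheorem15:
  fixes n :: nat
  assumes "n \<ge> 1"
  shows "(\<Sum>j=1..n. (csc (pi * (2 * real j - 1) / (4 * real n))) ^ 4)
           = 4 * (real n)^2 * (2 * (real n)^2 + 1) / 3"
proof -
  define m where "m = 2 * n"
  have m: "m \<ge> 1" using assms by (simp add: m_def)
  define y where "y = pi / (4 * real n)"
  have my: "real m * y = pi / 2" using assms by (simp add: m_def y_def)
  have smy: "sin (real m * y) \<noteq> 0" unfolding my by simp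
  define T where "T k = 1 / sin (pi * (2 * real k + 1) / (4 * real n)) ^ 4" for k :: nat
  define T2 where "T2 k = 1 / sin (pi * (2 * real k + 1) / (4 * real n)) ^ 2" for k :: nat
  have ang: "y + real k * pi / real m = pi * (2 * real k + 1) / (4 * real n)" for k
    using assms by (simp add: m_def y_def field_simps)
  have B: "(\<Sum>k<m. T2 k) = real m ^ 2"
    using sumB[OF m smy] unfolding ang T2_def my by simp
  have D: "(\<Sum>k<m. 2 * T2 k - 3 * T k) = real m ^ 4 * (2 - 3)"
    using sumD[OF m smy] unfolding ang T2_def T_def my by simp
  have tot: "(\<Sum>k<m. T k) = (2 * real m ^ 2 + real m ^ 4) / 3"
    using D B by (simp add: sum_subtractf sum_distrib_left[symmetric])
  have sym: "T (2 * n - 1 - k) = T k" if "k < n" for k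
  proof -
    have "pi * (2 * real (2 * n - 1 - k) + 1) / (4 * real n) = pi - pi * (2 * real k + 1) / (4 * real n)"
      using that assms by (simp add: of_nat_diff field_simps)
    then show ?thesis by (simp add: T_def)
  qed
  have split: "(\<Sum>k<m. T k) = (\<Sum>k<n. T k) + (\<Sum>k<n. T (n + k))"
  proof -
    have "(\<Sum>k<m. T k) = (\<Sum>k<n. T k) + (\<Sum>k\<in>{n..<n+n}. T k)"
      unfolding m_def lessThan_atLeast0 by (simp add: mult_2 sum.atLeastLessThan_concat)
    also have "(\<Sum>k\<in>{n..<n+n}. T k) = (\<Sum>k<n. T (n + k))"
      by (simp add: sum.shift_bounds_nat_ivl[of T 0 n n, simplified] lessThan_atLeast0 add.commute)
    finally show ?thesis .
  qed
  have second: "(\<Sum>k<n. T (n + k)) = (\<Sum>k<n. T k)"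
  proof -
    have "(\<Sum>k<n. T (n + k)) = (\<Sum>i<n. T (n + (n - Suc i)))"
      by (rule sum.nat_diff_reindex[symmetric])
    also have "\<dots> = (\<Sum>i<n. T i)"
    proof (rule sum.cong[OF refl])
      fix i assume "i \<in> {..<n}"
      then have "n + (n - Suc i) = 2 * n - 1 - i" by auto
      then show "T (n + (n - Suc i)) = T i" using sym \<open>i \<in> {..<n}\<close> by auto
    qed
    finally show ?thesis .
  qed
  have lhs: "(\<Sum>j=1..n. (csc (pi * (2 * real j - 1) / (4 * real n))) ^ 4) = (\<Sum>k<n. T k)"
    by (simp add: sum.atLeast1_atMost_eq T_def csc_def power_one_over algebra_simps)
  show ?thesis
    using tot split second unfolding lhs m_def by (simp add: field_simps power2_eq_square power4_eq_xxxx)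
qed

end
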